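(* Let $x=(x_1,\dots,x_5)\in\mathbb{Z}_{\ge 0}^5$ and let $y=(y_1,\dots,y_5)$ be obtained from $x$ by a move of the exact $(5,2)$ nim, i.e. there are two distinct indices $a\neq b$ with $y_a<x_a$, $y_b<x_b$, and $y_c=x_c$ for all $c\notin\{a,b\}$. Suppose the move changes the leader, i.e. there is an index $i\in\{a,b\}$ with $x_i=\max_{1\le c\le 5}x_c$ and $y_i<\max_{1\le c\le 5}y_c$. Then it is not the case that both $\hat x$ and $\hat y$ are P-positions of Moore's nim $(4,\le 2)$. In other words, there is no move in the exact $(5,2)$ nim from a $*P$ position to a $*P$ position that changes the leader.
   Context: Positions of the exact $(5,2)$ nim are vectors of $5$ nonnegative integers (pile sizes); a move consists of choosing exactly two piles and removing a positive number of stones from each of them. For a position $z\in\mathbb{Z}_{\ge0}^5$, the reduced position $\hat z\in\mathbb{Z}_{\ge0}^4$ is the multiset of pile sizes obtained from $z$ by deleting one copy of its maximum pile (the "leader"); equivalently, if $z$ is sorted as $z_{(1)}\le\dots\le z_{(5)}$, then $\hat z=(z_{(1)},z_{(2)},z_{(3)},z_{(4)})$. Moore's nim $(4,\le 2)$ is played on $4$ piles, a move removing a positive number of stones from at least one and at most two piles; the player unable to move loses. A position $w=(w_1,\dots,w_4)$ of it is a P-position iff for every bit position $j\ge 0$ the number of indices $r\in\{1,2,3,4\}$ whose $j$-th binary digit of $w_r$ equals $1$ is divisible by $3$ (i.e. equals $0$ or $3$). A position $z$ of the exact $(5,2)$ nim is called $*P$ if $\hat z$ is a P-position of Moore's nim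 $(4,\le 2)$. *)

theory Defs
  imports Main
begin

text \<open>Positions of exact (5,2) nim are lists of 5 natural numbers (indices 0..4).
  The reduced position deletes one copy of the maximum pile (the leader).\<close>

definition reduced :: "nat list \<Rightarrow> nat list" where
  "reduced z = remove1 (Max (set z)) z"

definition moore_P :: "nat list \<Rightarrow> bool" where
  "moore_P w \<longleftrightarrow> length w = 4 \<and>
     (\<forall>j. 3 dvd card {r. r < 4 \<and> bit (w ! r) j})"

definition starP :: "nat list \<Rightarrow> bool" where
  "starP z \<longleftrightarrow> moore_P (reduced z)"

end

theory Submission
  imports Defs "HOL-Library.Multiset"
begin

lemma topbit: "(u'::nat) < u \<Longrightarrow> \<exists>j. bit u j \<and> \<not> bit u' j \<and> (\<forall>k>j. bit u k = bit u' k)"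
proof (induction u arbitrary: u' rule: less_induct)
  case (less u)
  show ?case
  proof (cases "u div 2 = u' div 2")
    case True
    then have "odd u" "even u'" using less.prems by presburger+
    moreover have "\<forall>k>0. bit u k = bit u' k"
    proof (intro allI impI)
      fix k :: nat assume "k > 0"
      then obtain k' where "k = Suc k'" by (cases k) auto
      then show "bit u k = bit u' k" using True by (simp add: bit_Suc)
    qed
    ultimately show ?thesis by (intro exI[of _ 0]) (simp add: bit_0)
  next
    case False
    then have lt: "u' div 2 < u div 2" using less.prems
      by (metis div_le_mono le_neq_implies_less less_imp_le)
    have "u div 2 < u" using less.prems by simp
    from less.IH[OF this lt] obtain j where j: "bit (u div 2) j" "\<not> bit (u' div 2) j"
      "\<forall>k>j. bit (u div 2) k = bit (u' div 2) k" by blast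
    have "\<forall>k>Suc j. bit u k = bit u' k"
    proof (intro allI impI)
      fix k :: nat assume "k > Suc j"
      then obtain k' where "k = Suc k'" "k' > j" by (cases k) auto
      then show "bit u k = bit u' k" using j(3) by (simp add: bit_Suc)
    qed
    then show ?thesis using j by (intro exI[of _ "Suc j"]) (simp add: bit_Suc)
  qed
qed

lemma key:
  fixes f :: "nat \<Rightarrow> nat" and u u' v v' :: nat
  assumes "u' \<le> u" "v' < v"
    and h1: "\<And>j. 3 dvd (f j + of_bool (bit u j) + of_bool (bit v j))"
    and h2: "\<And>j. 3 dvd (f j + of_bool (bit u' j) + of_bool (bit v' j))"
  shows False
proof -
  obtain jv where jv: "bit v jv" "\<not> bit v' jv" "\<forall>k>jv. bit v k = bit v' k"
    using topbit[OF assms(2)] by blast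
  have bad: "\<And>j. \<not> (3 dvd (f j + of_bool (bit u j) + of_bool (bit v j))) \<or>
     \<not> (3 dvd (f j + of_bool (bit u' j) + of_bool (bit v' j))) \<Longrightarrow> False"
    using h1 h2 by blast
  show False
  proof (cases "u' = u")
    case True
    then show ?thesis using jv by (intro bad[of jv]) (cases "bit u jv"; simp; presburger)
  next
    case False
    then have "u' < u" using assms(1) by simp
    then obtain ju where ju: "bit u ju" "\<not> bit u' ju" "\<forall>k>ju. bit u k = bit u' k"
      using topbit by blast
    consider "ju = jv" | "ju < jv" | "jv < ju" by linarith
    then show ?thesis
    proof cases
      case 1 then show ?thesis using ju jv by (intro bad[of jv]) (simp; presburger)
    next
      case 2 then show ?thesis using ju jv by (intro bad[of jv]) (cases "bit u jv"; simp; presburger)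
    next
      case 3 then show ?thesis using ju jv by (intro bad[of ju]) (cases "bit v ju"; simp; presburger)
    qed
  qed
qed


definition cnt :: "nat multiset \<Rightarrow> nat \<Rightarrow> nat" where
  "cnt A j = size (filter_mset (\<lambda>v. bit v j) A)"

lemma cnt_add[simp]: "cnt (A + B) j = cnt A j + cnt B j"
  by (simp add: cnt_def)

lemma cnt_add_mset[simp]: "cnt (add_mset m A) j = cnt A j + of_bool (bit m j)"
  by (simp add: cnt_def)

lemma cnt_empty[simp]: "cnt {#} j = 0"
  by (simp add: cnt_def)

lemma cnt_remove: "M \<in># A \<Longrightarrow> cnt A j = cnt (A - {#M#}) j + of_bool (bit M j)"
  by (metis cnt_add_mset insert_DiffM)

lemma starP_cnt:
  assumes "length z = 5" "starP z"
  shows "3 dvd cnt (mset z - {#Max (set z)#}) j"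
proof -
  let ?M = "Max (set z)"
  let ?w = "remove1 ?M z"
  have Min: "?M \<in> set z" using assms(1) by (intro Max_in) auto
  have len: "length ?w = 4" using Min assms(1) by (simp add: length_remove1)
  have "3 dvd card {r. r < 4 \<and> bit (?w ! r) j}"
    using assms(2) unfolding starP_def moore_P_def reduced_def by blast
  also have "card {r. r < 4 \<and> bit (?w ! r) j} = length (filter (\<lambda>v. bit v j) ?w)"
    using len by (simp add: length_filter_conv_card)
  also have "\<dots> = size (filter_mset (\<lambda>v. bit v j) (mset ?w))"
    by (metis mset_filter size_mset)
  also have "\<dots> = cnt (mset z - {#?M#}) j"
    unfolding cnt_def mset_remove1 ..
  finally show ?thesis .
qed

lemma upd: "k < length xs \<Longrightarrow> mset (xs[k:=v]) + {#xs!k#} = mset xs + {#v#}"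
  by (simp add: mset_update)

lemma main:
  fixes x y :: "nat list" and a b :: nat
  assumes "length x = 5" and "length y = 5"
    and "a < 5" and "b < 5" and "a \<noteq> b"
    and "y ! a < x ! a" and "y ! b < x ! b"
    and oth: "\<forall>c<5. c \<noteq> a \<and> c \<noteq> b \<longrightarrow> y ! c = x ! c"
    and "x ! a = Max (set x)" and "y ! a < Max (set y)"
    and sx: "starP x" and sy: "starP y"
  shows False
proof -
  define Z where "Z = mset (x[a:=0,b:=0])"
  have hx: "mset x + {#0,0#} = Z + {#x!a, x!b#}"
    using upd[of a x 0] upd[of b "x[a:=0]" 0] assms(1,3,4,5) unfolding Z_def
    by (simp add: add_mset_commute)
  have yeq: "y = x[a := y!a, b := y!b]"
    using assms(1,2,3,4) oth by (intro nth_equalityI) (auto simp: nth_list_update)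
  have hy: "mset y + {#0,0#} = Z + {#y!a, y!b#}"
  proof -
    have e: "(x[a := y!a, b := y!b])[a:=0,b:=0] = x[a:=0,b:=0]"
      using assms(5) by (simp add: list_update_swap)
    have "mset (x[a := y!a, b := y!b]) + {#0,0#} = Z + {#y!a, y!b#}"
      using upd[of a "x[a := y!a, b := y!b]" 0] upd[of b "(x[a := y!a, b := y!b])[a:=0]" 0]
        assms(1,3,4,5) e unfolding Z_def
      by (simp add: add_mset_commute nth_list_update)
    then show ?thesis using yeq by simp
  qed
  have cy: "cnt (mset y) j = cnt Z j + of_bool (bit (y!a) j) + of_bool (bit (y!b) j)" for j
    using arg_cong[OF hy, of "\<lambda>A. cnt A j"] by simp
  have cx: "cnt (mset x) j = cnt Z j + of_bool (bit (x!a) j) + of_bool (bit (x!b) j)" for j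
    using arg_cong[OF hx, of "\<lambda>A. cnt A j"] by simp
  have xa_in: "x!a \<in># mset x" using assms(1,3) by simp
  have cxh: "3 dvd (cnt Z j + of_bool (bit (x!b) j))" for j
    using starP_cnt[OF assms(1) sx, of j] cnt_remove[OF xa_in, of j] cx[of j] assms(9) by simp
  let ?M = "Max (set y)"
  have "?M \<in> set y" using assms(2) by (intro Max_in) auto
  then obtain c where c: "c < 5" "y ! c = ?M" using assms(2) by (auto simp: in_set_conv_nth)
  have Min: "?M \<in># mset y" using c assms(2) by (metis nth_mem set_mset_mset)
  have cyh: "3 dvd (cnt Z j + of_bool (bit (y!a) j) + of_bool (bit (y!b) j) - of_bool (bit ?M j))" for j
    using starP_cnt[OF assms(2) sy, of j] cnt_remove[OF Min, of j] cy[of j] by simp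
  have "c \<noteq> a" using c assms(10) by auto
  show False
  proof (cases "c = b")
    case True
    show False
    proof (rule key[of 0 0 "y!a" "x!b" "cnt Z"])
      show "y!a < x!b" using assms(7,10) c True by simp
      show "3 dvd (cnt Z j + of_bool (bit 0 j) + of_bool (bit (x!b) j))" for j using cxh[of j] by simp
      show "3 dvd (cnt Z j + of_bool (bit 0 j) + of_bool (bit (y!a) j))" for j
        using cyh[of j] c True by simp
    qed simp
  next
    case False
    have "x[a:=0,b:=0] ! c = ?M" using c False \<open>c \<noteq> a\<close> oth assms(1) by (simp add: nth_list_update)
    then have "?M \<in># Z" unfolding Z_def using c assms(1)
      by (metis length_list_update nth_mem set_mset_mset)
    then obtain Z' where Z': "Z = add_mset ?M Z'" by (metis insert_DiffM)
    show False
    proof (rule key[of "y!a" ?M "y!b" "x!b" "cnt Z'"])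
      show "y!a \<le> ?M" using assms(10) by simp
      show "y!b < x!b" by fact
      show "3 dvd (cnt Z' j + of_bool (bit ?M j) + of_bool (bit (x!b) j))" for j
        using cxh[of j] Z' by simp
      show "3 dvd (cnt Z' j + of_bool (bit (y!a) j) + of_bool (bit (y!b) j))" for j
        using cyh[of j] Z' by (simp add: add.assoc)
    qed
  qed
qed

theorem lemma11:
  fixes x y :: "nat list" and a b i :: nat
  assumes "length x = 5" and "length y = 5"
    and "a < 5" and "b < 5" and "a \<noteq> b"
    and "y ! a < x ! a" and "y ! b < x ! b"
    and "\<forall>c<5. c \<noteq> a \<and> c \<noteq> b \<longrightarrow> y ! c = x ! c"
    and "i = a \<or> i = b"
    and "x ! i = Max (set x)" and "y ! i < Max (set y)"
  shows "\<not> (starP x \<and> starP y)"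
proof
  assume "starP x \<and> starP y"
  then show False
  proof (cases "i = a")
    case True
    then show False using main[of x y a b] assms \<open>starP x \<and> starP y\<close> by blast
  next
    case False
    then have "i = b" using assms(9) by simp
    then show False using main[of x y b a] assms \<open>starP x \<and> starP y\<close> by blast
  qed
qed

end
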